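(* Let $h>0$ and $I(S,C)=\log\frac{1+hS}{1+hSe^{-C}}$ on $S>0$, $C>0$. Then the Hessian of $I$ at $(S,C)$ is negative semidefinite if and only if $$C\ge \log\left(2+\frac{1}{hS}\right).$$ The boundary of this region is parametrized by $\lambda_c\in(0,1)$ as $hS=\frac{\sqrt{\lambda_c}}{1-\sqrt{\lambda_c}}$, $e^{-C}=\frac{\sqrt{\lambda_c}}{1+\sqrt{\lambda_c}}$, and $C\to\log 2$ as $\lambda_c\to 1$. In particular, for every $S>0$ and every $C\in(0,\log 2)$ the Hessian of $I$ at $(S,C)$ is not negative semidefinite.
   Context: Logarithms are natural. $I(S,C)$ is the mutual information spectral density (nats/sec/Hz) at a frequency with power gain $h$, input power density $S$ and fronthaul rate density $C$. *)

theory Defs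
  imports "HOL-Analysis.Analysis"
begin

definition MI :: "real \<Rightarrow> real \<Rightarrow> real \<Rightarrow> real" where
  "MI h S C = ln ((1 + h * S) / (1 + h * S * exp (- C)))"

definition hessian2 :: "(real \<Rightarrow> real \<Rightarrow> real) \<Rightarrow> real \<Rightarrow> real \<Rightarrow> real^2^2" where
  "hessian2 f S C = vector
     [vector [deriv (\<lambda>s. deriv (\<lambda>s'. f s' C) s) S,
              deriv (\<lambda>s. deriv (\<lambda>c. f s c) C) S],
      vector [deriv (\<lambda>c. deriv (\<lambda>s. f s c) S) C,
              deriv (\<lambda>c. deriv (\<lambda>c'. f S c') c) C]]"

definition neg_semidef :: "real^'n^'n \<Rightarrow> bool" where
  "neg_semidef M \<longleftrightarrow> (\<forall>v. v \<bullet> (M *v v) \<le> 0)"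

end

theory Submission
  imports Defs
begin

definition IS :: "real \<Rightarrow> real \<Rightarrow> real \<Rightarrow> real" where
  "IS h c s = h / (1 + h * s) - h * exp (- c) / (1 + h * s * exp (- c))"

definition IC :: "real \<Rightarrow> real \<Rightarrow> real \<Rightarrow> real" where
  "IC h s c = h * s * exp (- c) / (1 + h * s * exp (- c))"

lemma alg1: "(a::real) \<noteq> 0 \<Longrightarrow> b \<noteq> 0 \<Longrightarrow> 1 / (a / b) * ((h * b - k * a) / b^2) = h / a - k / b"
  by (simp add: field_simps power2_eq_square)

lemma d1:
  assumes h: "h > 0" and s: "s > 0"
  shows "((\<lambda>s. MI h s c) has_real_derivative IS h c s) (at s)"
proof -
  have p1: "1 + h * s > 0" using h s by (simp add: add_pos_pos)
  have p2: "1 + h * s * exp (- c) > 0" using h s by (simp add: add_pos_pos)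
  have q: "((\<lambda>x. (1 + h * x) / (1 + h * x * exp (- c))) has_real_derivative
       (h * (1 + h * s * exp (- c)) - h * exp (- c) * (1 + h * s)) / (1 + h * s * exp (- c))^2) (at s)"
    using p2 by (auto intro!: derivative_eq_intros simp: power2_eq_square)
  have "((\<lambda>s. MI h s c) has_real_derivative 
       1 / ((1 + h * s) / (1 + h * s * exp (- c))) * ((h * (1 + h * s * exp (- c)) - h * exp (- c) * (1 + h * s)) / (1 + h * s * exp (- c))^2)) (at s)"
    unfolding MI_def
    by (rule DERIV_chain2[OF DERIV_ln_divide q]) (use p1 p2 in simp)
  then show ?thesis unfolding IS_def
    apply (rule DERIV_cong)
    using alg1[of "1 + h * s" "1 + h * s * exp (- c)" h "h * exp (- c)"] p1 p2 by simp
qed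

lemma d2:
  assumes h: "h > 0" and s: "s > 0"
  shows "((\<lambda>c. MI h s c) has_real_derivative IC h s c) (at c)"
proof -
  have p1: "1 + h * s > 0" using h s by (simp add: add_pos_pos)
  have p2: "1 + h * s * exp (- c) > 0" using h s by (simp add: add_pos_pos)
  have q: "((\<lambda>c. (1 + h * s) / (1 + h * s * exp (- c))) has_real_derivative
       ((1 + h * s) * (h * s * exp (- c))) / (1 + h * s * exp (- c))^2) (at c)"
    using p2 by (auto intro!: derivative_eq_intros simp: power2_eq_square)
  have "((\<lambda>c. MI h s c) has_real_derivative 
       1 / ((1 + h * s) / (1 + h * s * exp (- c))) * (((1 + h * s) * (h * s * exp (- c))) / (1 + h * s * exp (- c))^2)) (at c)"
    unfolding MI_def
    by (rule DERIV_chain2[OF DERIV_ln_divide q]) (use p1 p2 in simp)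
  then show ?thesis unfolding IC_def
    apply (rule DERIV_cong)
    using p1 p2 by (simp add: power2_eq_square)
qed

lemma dSS:
  assumes h: "h > 0" and s: "s > 0"
  shows "((\<lambda>s. IS h c s) has_real_derivative (h ^ 2 * exp (- c) ^ 2 / (1 + h * s * exp (- c)) ^ 2 - h ^ 2 / (1 + h * s) ^ 2)) (at s)"
proof -
  have p1: "1 + h * s > 0" using h s by (simp add: add_pos_pos)
  have p2: "1 + h * s * exp (- c) > 0" using h s by (simp add: add_pos_pos)
  show ?thesis unfolding IS_def
    using p1 p2 by (auto intro!: derivative_eq_intros simp: power2_eq_square)
qed

lemma dCS:
  assumes h: "h > 0" and s: "s > 0"
  shows "((\<lambda>c. IS h c s) has_real_derivative (h * exp (- c) / (1 + h * s * exp (- c)) ^ 2)) (at c)"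
proof -
  have p2: "1 + h * s * exp (- c) > 0" using h s by (simp add: add_pos_pos)
  show ?thesis unfolding IS_def
    using p2 by (auto intro!: derivative_eq_intros simp: power2_eq_square algebra_simps)
qed

lemma dSC:
  assumes h: "h > 0" and s: "s > 0"
  shows "((\<lambda>s. IC h s c) has_real_derivative (h * exp (- c) / (1 + h * s * exp (- c)) ^ 2)) (at s)"
proof -
  have p2: "1 + h * s * exp (- c) > 0" using h s by (simp add: add_pos_pos)
  show ?thesis unfolding IC_def
    using p2 by (auto intro!: derivative_eq_intros simp: power2_eq_square algebra_simps)
qed

lemma dCC:
  assumes h: "h > 0" and s: "s > 0"
  shows "((\<lambda>c. IC h s c) has_real_derivative (- (h * s * exp (- c)) / (1 + h * s * exp (- c)) ^ 2)) (at c)"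
proof -
  have p2: "1 + h * s * exp (- c) > 0" using h s by (simp add: add_pos_pos)
  show ?thesis unfolding IC_def
    using p2 by (auto intro!: derivative_eq_intros simp: power2_eq_square algebra_simps)
qed

lemma hess:
  assumes h: "h > 0" and S: "S > 0"
  shows "hessian2 (MI h) S C = vector [vector [h ^ 2 * exp (- C) ^ 2 / (1 + h * S * exp (- C)) ^ 2 - h ^ 2 / (1 + h * S) ^ 2,
              h * exp (- C) / (1 + h * S * exp (- C)) ^ 2],
      vector [h * exp (- C) / (1 + h * S * exp (- C)) ^ 2, - (h * S * exp (- C)) / (1 + h * S * exp (- C)) ^ 2]]"
proof -
  have ev: "eventually (\<lambda>s. s \<in> {0<..}) (nhds S)"
    using S by (intro eventually_nhds_in_open) auto
  have e11: "deriv (\<lambda>s. deriv (\<lambda>s'. MI h s' C) s) S = deriv (\<lambda>s. IS h C s) S"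
    by (rule deriv_cong_ev[OF eventually_mono[OF ev]]) (auto intro!: DERIV_imp_deriv d1 h)
  have e12: "deriv (\<lambda>s. deriv (\<lambda>c. MI h s c) C) S = deriv (\<lambda>s. IC h s C) S"
    by (rule deriv_cong_ev[OF eventually_mono[OF ev]]) (auto intro!: DERIV_imp_deriv d2 h)
  have e21: "deriv (\<lambda>c. deriv (\<lambda>s. MI h s c) S) C = deriv (\<lambda>c. IS h c S) C"
    using DERIV_imp_deriv[OF d1[OF h S]] by simp
  have e22: "deriv (\<lambda>c. deriv (\<lambda>c'. MI h S c') c) C = deriv (\<lambda>c. IC h S c) C"
    using DERIV_imp_deriv[OF d2[OF h S]] by simp
  show ?thesis unfolding hessian2_def e11 e12 e21 e22
    using DERIV_imp_deriv[OF dSS[OF h S]] DERIV_imp_deriv[OF dSC[OF h S]]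
      DERIV_imp_deriv[OF dCS[OF h S]] DERIV_imp_deriv[OF dCC[OF h S]] by simp
qed

lemma quadform:
  fixes A B D :: real and v :: "real^2"
  shows "v \<bullet> (vector [vector [A, B], vector [B, D]] *v v) = A * (v$1)^2 + 2 * B * (v$1) * (v$2) + D * (v$2)^2"
  by (simp add: inner_vec_def matrix_vector_mult_def sum_2 power2_eq_square algebra_simps)

lemma negsd2:
  fixes A B D :: real
  assumes A: "A < 0"
  shows "neg_semidef (vector [vector [A, B], vector [B, D]] :: real^2^2) \<longleftrightarrow> A * D - B^2 \<ge> 0"
proof
  assume "neg_semidef (vector [vector [A, B], vector [B, D]] :: real^2^2)"
  then have "(vector [B, -A] :: real^2) \<bullet> ((vector [vector [A, B], vector [B, D]] :: real^2^2) *v vector [B, -A]) \<le> 0"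
    unfolding neg_semidef_def by (rule spec)
  then have "A * (A * D - B^2) \<le> 0" unfolding quadform by (simp add: power2_eq_square algebra_simps)
  then show "A * D - B^2 \<ge> 0" using A by (simp add: mult_le_0_iff)
next
  assume d: "A * D - B^2 \<ge> 0"
  show "neg_semidef (vector [vector [A, B], vector [B, D]] :: real^2^2)"
    unfolding neg_semidef_def quadform
  proof
    fix v :: "real^2"
    have "A * (A * (v$1)^2 + 2 * B * (v$1) * (v$2) + D * (v$2)^2) = (A * v$1 + B * v$2)^2 + (A * D - B^2) * (v$2)^2"
      by (simp add: power2_eq_square algebra_simps)
    also have "\<dots> \<ge> 0" using d by simp
    finally show "A * (v$1)^2 + 2 * B * (v$1) * (v$2) + D * (v$2)^2 \<le> 0"
      using A by (simp add: zero_le_mult_iff)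
  qed
qed

lemma detid:
  fixes h x u :: real
  assumes "h > 0" "x > 0" "u > 0"
  shows "(h ^ 2 * u ^ 2 / (1 + x * u) ^ 2 - h ^ 2 / (1 + x) ^ 2) * (- (x * u) / (1 + x * u) ^ 2)
      - (h * u / (1 + x * u) ^ 2) ^ 2 = h^2 * u * (x - u * (2 * x + 1)) * (1 + x * u) / ((1 + x)^2 * (1 + x * u)^4)"
proof -
  have a: "1 + x * u > 0" "1 + x > 0" using assms by (auto simp: add_pos_pos)
  have g: "\<And>a b::real. a \<noteq> 0 \<Longrightarrow> b \<noteq> 0 \<Longrightarrow> (h ^ 2 * u ^ 2 / b ^ 2 - h ^ 2 / a ^ 2) * (- (x * u) / b ^ 2)
      - (h * u / b ^ 2) ^ 2 = h^2 * (-(x*u)*(u^2*a^2 - b^2) - u^2 * a^2) / (a^2 * b^4)"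
    by (simp add: field_simps power2_eq_square power4_eq_xxxx)
  have n: "-(x*u)*(u^2*(1+x)^2 - (1+x*u)^2) - u^2 * (1+x)^2 = u * (x - u * (2 * x + 1)) * (1 + x * u)"
    by (simp add: power2_eq_square algebra_simps)
  show ?thesis using g[of "1+x" "1+x*u"] a n by (simp add: mult.assoc)
qed

lemma part1:
  assumes h: "h > 0" and S: "S > 0" and C: "C > 0"
  shows "neg_semidef (hessian2 (MI h) S C) \<longleftrightarrow> C \<ge> ln (2 + 1 / (h * S))"
proof -
  define x where "x = h * S"
  define u where "u = exp (- C)"
  have x: "x > 0" unfolding x_def using h S by simp
  have u: "u > 0" "u < 1" unfolding u_def using C by auto
  have b: "1 + x * u > 0" "1 + x > 0" using x u by (auto simp: add_pos_pos)
  have lt: "u / (1 + x * u) < 1 / (1 + x)" using b u by (simp add: field_simps)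
  have "(u / (1 + x * u))^2 < (1 / (1 + x))^2"
    using lt u b by (intro power_strict_mono) auto
  then have "h^2 * (u / (1 + x * u))^2 < h^2 * (1 / (1 + x))^2" using h by simp
  then have A: "h ^ 2 * u ^ 2 / (1 + x * u) ^ 2 - h ^ 2 / (1 + x) ^ 2 < 0"
    by (simp add: power_divide)
  have H: "hessian2 (MI h) S C = vector [vector [h ^ 2 * u ^ 2 / (1 + x * u) ^ 2 - h ^ 2 / (1 + x) ^ 2,
              h * u / (1 + x * u) ^ 2],
      vector [h * u / (1 + x * u) ^ 2, - (x * u) / (1 + x * u) ^ 2]]"
    unfolding hess[OF h S] x_def u_def by (simp add: power_mult_distrib)
  have pos: "h^2 * u * (1 + x * u) / ((1 + x)^2 * (1 + x * u)^4) > 0" using h u b by simp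
  have "neg_semidef (hessian2 (MI h) S C) \<longleftrightarrow> h^2 * u * (x - u * (2 * x + 1)) * (1 + x * u) / ((1 + x)^2 * (1 + x * u)^4) \<ge> 0"
    unfolding H negsd2[OF A] detid[OF h x u(1)] ..
  also have "\<dots> \<longleftrightarrow> x - u * (2 * x + 1) \<ge> 0"
  proof -
    have eqq: "h^2 * u * (x - u * (2 * x + 1)) * (1 + x * u) / ((1 + x)^2 * (1 + x * u)^4)
        = (x - u * (2 * x + 1)) * (h^2 * u * (1 + x * u) / ((1 + x)^2 * (1 + x * u)^4))" by simp
    have aux: "\<And>a p::real. p > 0 \<Longrightarrow> 0 \<le> a * p \<longleftrightarrow> 0 \<le> a" by (simp add: zero_le_mult_iff)
    show ?thesis unfolding eqq by (rule aux[OF pos])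
  qed
  also have "\<dots> \<longleftrightarrow> 2 + 1 / x \<le> exp C"
  proof -
    have e: "exp C = 1 / u" unfolding u_def by (simp add: exp_minus inverse_eq_divide)
    show ?thesis unfolding e using x u by (simp add: field_simps)
  qed
  also have "\<dots> \<longleftrightarrow> ln (2 + 1 / x) \<le> C"
    using x by (subst ln_le_cancel_iff[symmetric]) (auto simp: add_pos_pos)
  finally show ?thesis unfolding x_def .
qed

lemma part2:
  assumes h: "h > 0" and S: "S > 0" and C: "C > 0"
  shows "C = ln (2 + 1 / (h * S)) \<longleftrightarrow>
             (\<exists>l\<in>{0<..<1}. h * S = sqrt l / (1 - sqrt l)
                             \<and> exp (- C) = sqrt l / (1 + sqrt l))"
proof -
  define x where "x = h * S"
  have x: "x > 0" unfolding x_def using h S by simp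
  have eq: "C = ln (2 + 1 / x) \<longleftrightarrow> exp (- C) = x / (1 + 2 * x)"
  proof
    assume "C = ln (2 + 1 / x)"
    then have "exp C = 2 + 1 / x" using x by (simp add: add_pos_pos)
    then show "exp (- C) = x / (1 + 2 * x)" using x by (simp add: exp_minus field_simps)
  next
    assume "exp (- C) = x / (1 + 2 * x)"
    then have "exp C = 2 + 1 / x" using x by (simp add: exp_minus field_simps)
    then show "C = ln (2 + 1 / x)" by (metis ln_exp)
  qed
  show ?thesis unfolding x_def[symmetric] eq
  proof
    assume e: "exp (- C) = x / (1 + 2 * x)"
    define t where "t = x / (1 + x)"
    have t: "t > 0" "t < 1" unfolding t_def using x by auto
    have st: "sqrt (t^2) = t" using t by simp
    show "\<exists>l\<in>{0<..<1}. x = sqrt l / (1 - sqrt l) \<and> exp (- C) = sqrt l / (1 + sqrt l)"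
    proof (rule bexI[of _ "t^2"])
      show "t^2 \<in> {0<..<1}" using t by (simp add: power_less_one_iff)
      show "x = sqrt (t^2) / (1 - sqrt (t^2)) \<and> exp (- C) = sqrt (t^2) / (1 + sqrt (t^2))"
      proof
        show "x = sqrt (t^2) / (1 - sqrt (t^2))" unfolding st unfolding t_def using x by (simp add: field_simps)
        have "1 + t = (1 + 2 * x) / (1 + x)" unfolding t_def using x by (simp add: field_simps)
        then show "exp (- C) = sqrt (t^2) / (1 + sqrt (t^2))" unfolding st e using x
          by (simp add: t_def)
      qed
    qed
  next
    assume "\<exists>l\<in>{0<..<1}. x = sqrt l / (1 - sqrt l) \<and> exp (- C) = sqrt l / (1 + sqrt l)"
    then obtain l where l: "l \<in> {0<..<1}" "x = sqrt l / (1 - sqrt l)" "exp (- C) = sqrt l / (1 + sqrt l)"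
      by blast
    define t where "t = sqrt l"
    have t: "t > 0" "t < 1" unfolding t_def using l(1) by auto
    have x1: "1 + x > 0" using x by simp
    have "t = x / (1 + x)" using l(2) t x1 unfolding t_def[symmetric] by (simp add: field_simps)
    then have tx: "t = x / (1 + x)" .
    have "1 + t = (1 + 2 * x) / (1 + x)" unfolding tx using x1 by (simp add: field_simps)
    then have "t / (1 + t) = x / (1 + 2 * x)" unfolding tx using x1 x by simp
    then show "exp (- C) = x / (1 + 2 * x)" using l(3) unfolding t_def by simp
  qed
qed

lemma part3: "((\<lambda>l. - ln (sqrt l / (1 + sqrt l))) \<longlongrightarrow> ln 2) (at_left 1)"
proof -
  have "((\<lambda>l. - ln (sqrt l / (1 + sqrt l))) \<longlongrightarrow> - ln (sqrt 1 / (1 + sqrt 1))) (at_left (1::real))"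
    by (intro tendsto_intros) auto
  then show ?thesis by (simp add: ln_div)
qed

theorem mainTheorem4:
  fixes h :: real
  assumes h: "h > 0"
  shows "(\<forall>S C. S > 0 \<longrightarrow> C > 0 \<longrightarrow>
            (neg_semidef (hessian2 (MI h) S C) \<longleftrightarrow> C \<ge> ln (2 + 1 / (h * S))))
       \<and> (\<forall>S C. S > 0 \<longrightarrow> C > 0 \<longrightarrow>
            (C = ln (2 + 1 / (h * S)) \<longleftrightarrow>
             (\<exists>l\<in>{0<..<1}. h * S = sqrt l / (1 - sqrt l)
                             \<and> exp (- C) = sqrt l / (1 + sqrt l))))
       \<and> ((\<lambda>l. - ln (sqrt l / (1 + sqrt l))) \<longlongrightarrow> ln 2) (at_left 1)
       \<and> (\<forall>S C. S > 0 \<longrightarrow> 0 < C \<longrightarrow> C < ln 2 \<longrightarrow>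
            \<not> neg_semidef (hessian2 (MI h) S C))"
proof (intro conjI allI impI)
  fix S C :: real assume "S > 0" "C > 0"
  then show "neg_semidef (hessian2 (MI h) S C) \<longleftrightarrow> C \<ge> ln (2 + 1 / (h * S))"
    by (rule part1[OF h])
next
  fix S C :: real assume "S > 0" "C > 0"
  then show "C = ln (2 + 1 / (h * S)) \<longleftrightarrow>
             (\<exists>l\<in>{0<..<1}. h * S = sqrt l / (1 - sqrt l)
                             \<and> exp (- C) = sqrt l / (1 + sqrt l))"
    by (rule part2[OF h])
next
  show "((\<lambda>l. - ln (sqrt l / (1 + sqrt l))) \<longlongrightarrow> ln 2) (at_left 1)" by (rule part3)
next
  fix S C :: real assume S: "S > 0" and C: "0 < C" "C < ln 2"
  have hs: "0 < 1 / (h * S)" using h S by simp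
  have "ln 2 \<le> ln (2 + 1 / (h * S))" using hs by (subst ln_le_cancel_iff) (auto simp: add_pos_pos)
  then have "\<not> C \<ge> ln (2 + 1 / (h * S))" using C by simp
  then show "\<not> neg_semidef (hessian2 (MI h) S C)" using part1[OF h S C(1)] by simp
qed

end
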